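(* Let $M$ be a unit speed curve $\gamma: I\to\mathbb{R}^3$ with arc-length parameter $s$, curvature $\kappa(s)\neq 0$ and torsion $\tau(s)$, and put $\varphi(s) = \int_0^s \tau(t)\,dt + \varphi_0$ for a constant $\varphi_0$. Let $K$ be a curve $\beta$, parametrized by the same arc-length parameter $s$, with $\beta''(s) = \overline{\kappa}(s)\gamma'(s)$, whose curvature and torsion are $\overline{\kappa}(s) = \kappa(s)\cos\varphi(s)$ and $\overline{\tau}(s) = \kappa(s)\sin\varphi(s)$. Then: (i) $K$ is a Mannheim curve if and only if $\kappa(s) = R\cos\left(\int_0^s\tau(t)\,dt+\varphi_0\right)$ for some constant $R$; (ii) $K$ is a $B$-Mannheim curve if and only if $\kappa(s) = R\sin\left(\int_0^s\tau(t)\,dt+\varphi_0\right)$ for some constant $R$.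
   Context: A curve with curvature $\overline{\kappa}$ and torsion $\overline{\tau}$ is a Mannheim curve if $\overline{\kappa}^2+\overline{\tau}^2 = c\,\overline{\kappa}$ for some nonzero real constant $c$ (equivalently $\overline{\kappa} = \lambda(\overline{\kappa}^2+\overline{\tau}^2)$ with $\lambda = 1/c$ constant), and a $B$-Mannheim curve if $\overline{\kappa}^2+\overline{\tau}^2 = c\,\overline{\tau}$ for some nonzero real constant $c$. *)

theory Defs
  imports "HOL-Analysis.Analysis"
begin

definition oint :: "real \<Rightarrow> real \<Rightarrow> (real \<Rightarrow> real) \<Rightarrow> real" where
  "oint a b f = (if a \<le> b then integral {a..b} f else - integral {b..a} f)"

definition mannheim_curve :: "real set \<Rightarrow> (real \<Rightarrow> real) \<Rightarrow> (real \<Rightarrow> real) \<Rightarrow> bool" where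
  "mannheim_curve I kb tb \<longleftrightarrow> (\<exists>c. c \<noteq> 0 \<and> (\<forall>s\<in>I. (kb s)^2 + (tb s)^2 = c * kb s))"

definition B_mannheim_curve :: "real set \<Rightarrow> (real \<Rightarrow> real) \<Rightarrow> (real \<Rightarrow> real) \<Rightarrow> bool" where
  "B_mannheim_curve I kb tb \<longleftrightarrow> (\<exists>c. c \<noteq> 0 \<and> (\<forall>s\<in>I. (kb s)^2 + (tb s)^2 = c * tb s))"

end

theory Submission
  imports Defs
begin

theorem mainTheorem5:
  fixes I :: "real set"
    and \<gamma> T N B \<beta> Tb :: "real \<Rightarrow> real^3"
    and \<kappa> \<tau> kb tb :: "real \<Rightarrow> real"
    and \<phi>0 :: real
  assumes I: "is_interval I" "0 \<in> I"
    \<comment> \<open>M: unit speed curve gamma with Frenet frame T, N, B, curvature kappa /= 0, torsion tau\<close>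
    and gT: "\<And>s. s \<in> I \<Longrightarrow> (\<gamma> has_vector_derivative T s) (at s within I)"
    and frame: "\<And>s. s \<in> I \<Longrightarrow> norm (T s) = 1 \<and> norm (N s) = 1 \<and> T s \<bullet> N s = 0
                                  \<and> B s = cross3 (T s) (N s)"
    and FS_T: "\<And>s. s \<in> I \<Longrightarrow> (T has_vector_derivative (\<kappa> s *\<^sub>R N s)) (at s within I)"
    and FS_N: "\<And>s. s \<in> I \<Longrightarrow>
                 (N has_vector_derivative (- \<kappa> s *\<^sub>R T s + \<tau> s *\<^sub>R B s)) (at s within I)"
    and FS_B: "\<And>s. s \<in> I \<Longrightarrow> (B has_vector_derivative (- \<tau> s *\<^sub>R N s)) (at s within I)"
    and k_nz: "\<And>s. s \<in> I \<Longrightarrow> \<kappa> s \<noteq> 0"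
    \<comment> \<open>K: curve beta with the same arc-length parameter, beta'' = kb * gamma',
        Frenet frame (Tb, T, cross3 Tb T), curvature kb and torsion tb\<close>
    and bT: "\<And>s. s \<in> I \<Longrightarrow> (\<beta> has_vector_derivative Tb s) (at s within I)"
    and bunit: "\<And>s. s \<in> I \<Longrightarrow> norm (Tb s) = 1"
    and bFS_T: "\<And>s. s \<in> I \<Longrightarrow> (Tb has_vector_derivative (kb s *\<^sub>R T s)) (at s within I)"
    and bFS_N: "\<And>s. s \<in> I \<Longrightarrow>
                 (T has_vector_derivative (- kb s *\<^sub>R Tb s + tb s *\<^sub>R cross3 (Tb s) (T s))) (at s within I)"
    and kb_def: "\<And>s. s \<in> I \<Longrightarrow> kb s = \<kappa> s * cos (oint 0 s \<tau> + \<phi>0)"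
    and tb_def: "\<And>s. s \<in> I \<Longrightarrow> tb s = \<kappa> s * sin (oint 0 s \<tau> + \<phi>0)"
  shows "(mannheim_curve I kb tb \<longleftrightarrow>
            (\<exists>R. \<forall>s\<in>I. \<kappa> s = R * cos (oint 0 s \<tau> + \<phi>0)))
       \<and> (B_mannheim_curve I kb tb \<longleftrightarrow>
            (\<exists>R. \<forall>s\<in>I. \<kappa> s = R * sin (oint 0 s \<tau> + \<phi>0)))"
proof -
  define ph where "ph s = oint 0 s \<tau> + \<phi>0" for s
  have sq: "(kb s)^2 + (tb s)^2 = (\<kappa> s)^2" if "s \<in> I" for s
  proof -
    have "(kb s)^2 + (tb s)^2 = (\<kappa> s)^2 * ((sin (ph s))^2 + (cos (ph s))^2)"
      using kb_def[OF that] tb_def[OF that] unfolding ph_def by algebra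
    also have "\<dots> = (\<kappa> s)^2" by (simp only: sin_cos_squared_add mult_1_right)
    finally show ?thesis .
  qed
  have k0: "\<kappa> 0 \<noteq> 0" using k_nz I(2) by blast
  have A: "mannheim_curve I kb tb \<longleftrightarrow> (\<exists>R. \<forall>s\<in>I. \<kappa> s = R * cos (ph s))"
  proof
    assume "mannheim_curve I kb tb"
    then obtain c where c: "c \<noteq> 0" "\<forall>s\<in>I. (kb s)^2 + (tb s)^2 = c * kb s"
      unfolding mannheim_curve_def by blast
    have "\<forall>s\<in>I. \<kappa> s = c * cos (ph s)"
    proof
      fix s assume s: "s \<in> I"
      have "(\<kappa> s)^2 = c * kb s" using c(2) s sq[OF s] by metis
      then have "(\<kappa> s)^2 = c * (\<kappa> s * cos (ph s))" using kb_def[OF s] unfolding ph_def by simp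
      then have "\<kappa> s * \<kappa> s = \<kappa> s * (c * cos (ph s))" by (simp add: power2_eq_square algebra_simps)
      then show "\<kappa> s = c * cos (ph s)" using k_nz[OF s] by simp
    qed
    then show "\<exists>R. \<forall>s\<in>I. \<kappa> s = R * cos (ph s)" by blast
  next
    assume "\<exists>R. \<forall>s\<in>I. \<kappa> s = R * cos (ph s)"
    then obtain R where R: "\<forall>s\<in>I. \<kappa> s = R * cos (ph s)" by blast
    have "R \<noteq> 0" using R I(2) k0 by force
    moreover have "\<forall>s\<in>I. (kb s)^2 + (tb s)^2 = R * kb s"
    proof
      fix s assume s: "s \<in> I"
      have "(kb s)^2 + (tb s)^2 = \<kappa> s * \<kappa> s" using sq[OF s] by (simp add: power2_eq_square)
      also have "\<dots> = \<kappa> s * (R * cos (ph s))" using R s by metis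
      also have "\<dots> = R * kb s" using kb_def[OF s] unfolding ph_def by simp
      finally show "(kb s)^2 + (tb s)^2 = R * kb s" .
    qed
    ultimately show "mannheim_curve I kb tb" unfolding mannheim_curve_def by blast
  qed
  have B: "B_mannheim_curve I kb tb \<longleftrightarrow> (\<exists>R. \<forall>s\<in>I. \<kappa> s = R * sin (ph s))"
  proof
    assume "B_mannheim_curve I kb tb"
    then obtain c where c: "c \<noteq> 0" "\<forall>s\<in>I. (kb s)^2 + (tb s)^2 = c * tb s"
      unfolding B_mannheim_curve_def by blast
    have "\<forall>s\<in>I. \<kappa> s = c * sin (ph s)"
    proof
      fix s assume s: "s \<in> I"
      have "(\<kappa> s)^2 = c * tb s" using c(2) s sq[OF s] by metis
      then have "(\<kappa> s)^2 = c * (\<kappa> s * sin (ph s))" using tb_def[OF s] unfolding ph_def by simp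
      then have "\<kappa> s * \<kappa> s = \<kappa> s * (c * sin (ph s))" by (simp add: power2_eq_square algebra_simps)
      then show "\<kappa> s = c * sin (ph s)" using k_nz[OF s] by simp
    qed
    then show "\<exists>R. \<forall>s\<in>I. \<kappa> s = R * sin (ph s)" by blast
  next
    assume "\<exists>R. \<forall>s\<in>I. \<kappa> s = R * sin (ph s)"
    then obtain R where R: "\<forall>s\<in>I. \<kappa> s = R * sin (ph s)" by blast
    have "R \<noteq> 0" using R I(2) k0 by force
    moreover have "\<forall>s\<in>I. (kb s)^2 + (tb s)^2 = R * tb s"
    proof
      fix s assume s: "s \<in> I"
      have "(kb s)^2 + (tb s)^2 = \<kappa> s * \<kappa> s" using sq[OF s] by (simp add: power2_eq_square)
      also have "\<dots> = \<kappa> s * (R * sin (ph s))" using R s by metis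
      also have "\<dots> = R * tb s" using tb_def[OF s] unfolding ph_def by simp
      finally show "(kb s)^2 + (tb s)^2 = R * tb s" .
    qed
    ultimately show "B_mannheim_curve I kb tb" unfolding B_mannheim_curve_def by blast
  qed
  show ?thesis using A B unfolding ph_def by simp
qed

end
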